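(* For $n\in\mathbb{N}$ let $(U_k^{(n)})_{k\in\mathbb{N}}$ be independent random variables uniformly distributed on $\{1,\dots,n\}$. Assume $m_n\to\infty$ and $m_n=o(n)$ as $n\to\infty$. Then $${\rm Var}\Bigl(\sum_{p\le m_n,\ p\ \text{prime}}\log p\cdot\mathbbm{1}_{\{\max_{1\le k\le m_n}\lambda_p(U_k^{(n)})\ge1\}}\Bigr)=O(m_n\log m_n),\qquad n\to\infty.$$
   Context: For a prime $p$ and $k\in\mathbb{N}$, $\lambda_p(k)$ is the exponent of $p$ in the prime factorization of $k$. *)

theory Defs
  imports "HOL-Probability.Probability" "HOL-Library.Landau_Symbols"
          "HOL-Computational_Algebra.Primes"
begin

text \<open>Joint law of (U_1^{(n)},...,U_m^{(n)}): independent, each uniform on {1..n}.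
  Coordinates outside {1..m} are fixed to the default value 0 (irrelevant).\<close>
definition U_law :: "nat \<Rightarrow> nat \<Rightarrow> (nat \<Rightarrow> nat) pmf" where
  "U_law n m = Pi_pmf {1..m} 0 (\<lambda>_. pmf_of_set {1..n})"

definition S_var :: "nat \<Rightarrow> (nat \<Rightarrow> nat) \<Rightarrow> real" where
  "S_var m u = (\<Sum>p\<in>{p. prime p \<and> p \<le> m}.
      ln (real p) * (if Max ((\<lambda>k. multiplicity p (u k)) ` {1..m}) \<ge> 1 then 1 else 0))"

end

theory Submission
  imports Defs
begin


lemma prod_primes_dvd:
  fixes P :: "nat set"
  assumes "finite P" "\<forall>p\<in>P. prime p \<and> p dvd N"
  shows "(\<Prod>P) dvd N"
  using assms
proof (induction P rule: finite_induct)
  case empty then show ?case by simp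
next
  case (insert p P)
  have "coprime p (\<Prod>P)"
  proof (rule prod_coprime_right)
    fix q assume "q \<in> P"
    hence "p \<noteq> q" "prime p" "prime q" using insert by auto
    thus "coprime p q" by (rule primes_coprime[rotated 2])
  qed
  then show ?case using insert by (simp add: divides_mult)
qed

lemma sum_ln_primes_le:
  fixes P :: "nat set"
  assumes "finite P" "\<forall>p\<in>P. prime p \<and> p dvd N" "N > 0"
  shows "(\<Sum>p\<in>P. ln (real p)) \<le> ln (real N)"
proof -
  have "(\<Prod>P) dvd N" using prod_primes_dvd assms by blast
  hence le: "(\<Prod>P) \<le> N" using assms(3) by (simp add: dvd_imp_le)
  have pos: "\<forall>p\<in>P. 0 < real p" using assms(2) prime_gt_0_nat by auto
  have "(\<Sum>p\<in>P. ln (real p)) = ln (\<Prod>p\<in>P. real p)"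
    using pos assms(1) by (simp add: ln_prod)
  also have "\<dots> = ln (real (\<Prod>P))" by simp
  also have "\<dots> \<le> ln (real N)"
  proof -
    have a: "0 < real (\<Prod>P)" using pos assms(1) by (simp add: prod_pos)
    have b: "real (\<Prod>P) \<le> real N" using le by (simp only: of_nat_le_iff)
    show ?thesis using a b by (metis ln_le_cancel_iff less_le_trans)
  qed
  finally show ?thesis .
qed

definition theta :: "nat \<Rightarrow> real" where
  "theta x = (\<Sum>p\<in>{p. prime p \<and> p \<le> x}. ln (real p))"

lemma binom_le: "(2*k+1 choose k) \<le> 4^k"
proof -
  have "(2*k+1 choose k) + (2*k+1 choose (k+1)) \<le> (\<Sum>j\<le>2*k+1. (2*k+1) choose j)"
  proof -
    have "{k, k+1} \<subseteq> {..2*k+1}" by auto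
    hence "(\<Sum>j\<in>{k,k+1}. (2*k+1) choose j) \<le> (\<Sum>j\<le>2*k+1. (2*k+1) choose j)"
      by (intro sum_mono2) auto
    thus ?thesis by simp
  qed
  also have "\<dots> = 2^(2*k+1)" by (rule choose_row_sum)
  also have "(2*k+1 choose (k+1)) = (2*k+1 choose k)"
    using binomial_symmetric[of k "2*k+1"] by simp
  finally have "2 * (2*k+1 choose k) \<le> 2 * 4^k"
    by (simp add: power_mult power_add)
  thus ?thesis by simp
qed

lemma primes_dvd_binom:
  assumes "prime p" "k+1 < p" "p \<le> 2*k+1"
  shows "p dvd (2*k+1 choose k)"
proof -
  have eq: "fact k * fact (k+1) * (2*k+1 choose k) = (fact (2*k+1) :: nat)"
    using binomial_fact_lemma[of k "2*k+1"] by (simp add: mult_ac)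
  have "p dvd fact (2*k+1)" using assms by (subst prime_dvd_fact_iff) auto
  hence "p dvd fact k * fact (k+1) * (2*k+1 choose k)" by (simp only: eq)
  moreover have "\<not> p dvd fact k" using assms by (subst prime_dvd_fact_iff[OF assms(1)]) simp
  moreover have "\<not> p dvd fact (k+1)" using assms by (subst prime_dvd_fact_iff[OF assms(1)]) simp
  ultimately show ?thesis using assms(1) by (metis prime_dvd_mult_iff)
qed

lemma theta_le: "theta x \<le> real x * ln 4"
proof (induction x rule: less_induct)
  case (less x)
  show ?case
  proof (cases "x \<le> 2")
    case True
    have "theta x \<le> ln (real 2)"
    proof -
      have "{p. prime p \<and> p \<le> x} \<subseteq> {2}"
      proof
        fix p assume p: "p \<in> {p. prime p \<and> p \<le> x}"
        hence "2 \<le> p" by (simp add: prime_ge_2_nat)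
        thus "p \<in> {2}" using p True by simp
      qed
      hence "theta x \<le> (\<Sum>p\<in>{2::nat}. ln (real p))"
        unfolding theta_def by (intro sum_mono2) auto
      thus ?thesis by simp
    qed
    moreover have "ln (real 2) \<le> real x * ln 4" if "x \<ge> 1"
    proof -
      have "ln (2::real) \<le> ln 4" by simp
      also have "\<dots> \<le> real x * ln 4" using that by simp
      finally show ?thesis by simp
    qed
    moreover have "theta x = 0" if "x < 2"
      unfolding theta_def using that
      by (intro sum.neutral) (auto dest: prime_ge_2_nat)
    ultimately show ?thesis by (cases "x < 2") (auto)
  next
    case False
    show ?thesis
    proof (cases "even x")
      case True
      have nx: "\<not> prime x" using True False prime_odd_nat[of x] by auto
      have "{p. prime p \<and> p \<le> x} = {p. prime p \<and> p \<le> x - 1}"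
      proof (intro Collect_cong iffI)
        fix p assume p: "prime p \<and> p \<le> x"
        hence "p \<noteq> x" using nx by auto
        thus "prime p \<and> p \<le> x - 1" using p by arith
      qed auto
      hence "theta x = theta (x-1)" unfolding theta_def by simp
      also have "\<dots> \<le> real (x-1) * ln 4" using less[of "x-1"] False by (simp add: of_nat_diff)
      also have "\<dots> \<le> real x * ln 4" by simp
      finally show ?thesis .
    next
      case odd: False
      then obtain k where x: "x = 2*k+1" by (metis oddE)
      have split: "{p. prime p \<and> p \<le> x} = {p. prime p \<and> p \<le> k+1} \<union> {p. prime p \<and> k+1 < p \<and> p \<le> 2*k+1}"
        using x by auto
      have "theta x = theta (k+1) + (\<Sum>p\<in>{p. prime p \<and> k+1 < p \<and> p \<le> 2*k+1}. ln (real p))"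
        unfolding theta_def split by (subst sum.union_disjoint) auto
      also have "(\<Sum>p\<in>{p. prime p \<and> k+1 < p \<and> p \<le> 2*k+1}. ln (real p)) \<le> ln (real (2*k+1 choose k))"
        using primes_dvd_binom[of _ k] by (intro sum_ln_primes_le) auto
      also have "\<dots> \<le> ln (real (4^k))"
        using binom_le[of k] by (subst ln_le_cancel_iff) (auto simp del: of_nat_power)
      also have "\<dots> = real k * ln 4" by (simp add: ln_realpow)
      also have "theta (k+1) \<le> real (k+1) * ln 4" using less[of "k+1"] x False by (simp add: algebra_simps)
      finally show ?thesis using x by (simp add: algebra_simps)
    qed
  qed
qed

lemma card_multiples:
  assumes "d > 0"
  shows "card {k\<in>{1..x}. d dvd k} = x div d"
proof -
  have "{k\<in>{1..x}. d dvd k} = (\<lambda>j. d*j) ` {1..x div d}"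
  proof (intro equalityI subsetI)
    fix k assume "k \<in> {k\<in>{1..x}. d dvd k}"
    hence k: "1 \<le> k" "k \<le> x" "d dvd k" by auto
    then obtain j where "k = d*j" by blast
    hence j: "k = d*j" "1 \<le> k" "k \<le> x" using k by auto
    hence "1 \<le> j" by (cases j) auto
    moreover have "j \<le> x div d" using j assms by (simp add: less_eq_div_iff_mult_less_eq mult.commute)
    ultimately show "k \<in> (\<lambda>j. d*j) ` {1..x div d}" using j by auto
  next
    fix k assume "k \<in> (\<lambda>j. d*j) ` {1..x div d}"
    then obtain j where j0: "j \<in> {1..x div d}" "k = d*j" by blast
    hence j: "k = d*j" "1 \<le> j" "j \<le> x div d" by auto
    have "d*j \<le> x" using j assms by (simp add: less_eq_div_iff_mult_less_eq mult.commute)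
    moreover have "1 \<le> d*j" using j assms by simp
    ultimately show "k \<in> {k\<in>{1..x}. d dvd k}" using j by auto
  qed
  also have "card \<dots> = x div d"
    using assms by (subst card_image) (auto simp: inj_on_def)
  finally show ?thesis .
qed

lemma div_ge_real: "d > 0 \<Longrightarrow> real (x div d) \<ge> real x / real d - 1"
proof -
  assume d: "d > 0"
  have "x = d * (x div d) + x mod d" by simp
  hence "real x = real d * real (x div d) + real (x mod d)" by (metis of_nat_add of_nat_mult)
  moreover have "real (x mod d) < real d" using d by simp
  ultimately have "real x < real d * (real (x div d) + 1)" by (simp add: algebra_simps)
  thus ?thesis using d by (simp add: field_simps)
qed

lemma sum_ln_le: "(\<Sum>k\<in>{1..x}. ln (real k)) \<le> real x * ln (real x)"
proof -
  have "(\<Sum>k\<in>{1..x}. ln (real k)) \<le> (\<Sum>k\<in>{1..x}. ln (real x))"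
    by (intro sum_mono) auto
  thus ?thesis by simp
qed

lemma mertens:
  assumes "x \<ge> 1"
  shows "(\<Sum>p\<in>{p. prime p \<and> p \<le> x}. ln (real p) / real p) \<le> ln (real x) + ln 4"
proof -
  define P where "P = {p. prime p \<and> p \<le> x}"
  have finP: "finite P" unfolding P_def by auto
  have "(\<Sum>p\<in>P. ln (real p) * real (x div p)) = (\<Sum>p\<in>P. \<Sum>k\<in>{k\<in>{1..x}. p dvd k}. ln (real p))"
    using card_multiples[of _ x] by (intro sum.cong) (auto simp: P_def prime_gt_0_nat)
  also have "\<dots> = (\<Sum>k\<in>{1..x}. \<Sum>p\<in>{p\<in>P. p dvd k}. ln (real p))"
    by (rule sum.swap_restrict) (auto simp: finP)
  also have "\<dots> \<le> (\<Sum>k\<in>{1..x}. ln (real k))"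
    by (intro sum_mono sum_ln_primes_le) (auto simp: finP P_def)
  also have "\<dots> \<le> real x * ln (real x)" by (rule sum_ln_le)
  finally have A: "(\<Sum>p\<in>P. ln (real p) * real (x div p)) \<le> real x * ln (real x)" .
  have "(\<Sum>p\<in>P. ln (real p) * (real x / real p - 1)) \<le> (\<Sum>p\<in>P. ln (real p) * real (x div p))"
    by (intro sum_mono mult_left_mono div_ge_real) (auto simp: P_def prime_gt_0_nat dest: prime_gt_1_nat)
  also note A
  finally have A2: "(\<Sum>p\<in>P. ln (real p) * (real x / real p - 1)) \<le> real x * ln (real x)" .
  have "(\<Sum>p\<in>P. ln (real p) * (real x / real p - 1)) = (\<Sum>p\<in>P. real x * (ln (real p) / real p) - ln (real p))"
    by (intro sum.cong refl) (simp add: right_diff_distrib)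
  also have "\<dots> = real x * (\<Sum>p\<in>P. ln (real p) / real p) - theta x"
    by (simp only: sum_subtractf sum_distrib_left theta_def P_def)
  finally have "real x * (\<Sum>p\<in>P. ln (real p) / real p) - theta x \<le> real x * ln (real x)"
    using A2 by simp
  hence "real x * (\<Sum>p\<in>P. ln (real p) / real p) \<le> real x * ln (real x) + real x * ln 4"
    using theta_le[of x] by linarith
  hence "real x * (\<Sum>p\<in>P. ln (real p) / real p) \<le> real x * (ln (real x) + ln 4)"
    by (simp add: algebra_simps)
  thus ?thesis using assms unfolding P_def by (subst (asm) mult_le_cancel_left_pos) auto
qed




lemma pow_diff_le:
  fixes x y :: real
  assumes "0 \<le> y" "y \<le> 1" "0 \<le> x" "x \<le> 1"
  shows "x^m - y^m \<le> real m * max 0 (x - y)"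
proof (cases "x \<le> y")
  case True
  hence "x^m \<le> y^m" using assms by (intro power_mono) auto
  moreover have "0 \<le> real m * max 0 (x-y)" by simp
  ultimately show ?thesis by linarith
next
  case False
  have "x^m - y^m \<le> real m * (x - y)"
  proof (induction m)
    case 0 then show ?case by simp
  next
    case (Suc m)
    have "x^Suc m - y^Suc m = x * (x^m - y^m) + (x - y) * y^m" by (simp add: algebra_simps)
    also have "\<dots> \<le> (x^m - y^m) + (x - y)"
    proof -
      have "x^m - y^m \<ge> 0" using False assms by (simp add: power_mono)
      hence "x * (x^m - y^m) \<le> x^m - y^m" using assms by (simp add: mult_left_le_one_le)
      moreover have "(x - y) * y^m \<le> x - y" using False assms
        by (simp add: mult_left_le power_le_one)
      ultimately show ?thesis by linarith
    qed
    also have "\<dots> \<le> real (Suc m) * (x - y)" using Suc by (simp add: algebra_simps)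
    finally show ?case .
  qed
  thus ?thesis using False by simp
qed

lemma pmf_integral_cong:
  fixes f g :: "'a \<Rightarrow> real"
  assumes "\<And>x. x \<in> set_pmf M \<Longrightarrow> f x = g x"
  shows "measure_pmf.expectation M f = measure_pmf.expectation M g"
  by (intro integral_cong_AE) (auto simp: AE_measure_pmf_iff assms)

locale ctx =
  fixes n m :: nat
  assumes m1: "1 \<le> m" and mn: "m \<le> n"
begin

definition P where "P = {p. prime p \<and> p \<le> m}"
definition B where "B p = {u::nat\<Rightarrow>nat. \<forall>k\<in>{1..m}. \<not> p dvd u k}"
definition T where "T u = (\<Sum>p\<in>P. ln (real p) * indicator (B p) u)"
definition bb where "bb p q = real (card {x\<in>{1..n}. \<not> p dvd x \<and> \<not> q dvd x}) / real n"

abbreviation "M \<equiv> U_law n m"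

lemma finP: "finite P" unfolding P_def by auto

lemma supp: "set_pmf M = PiE_dflt {1..m} 0 (\<lambda>_. {1..n})"
  using mn m1 unfolding U_law_def by (subst set_Pi_pmf) (auto simp: o_def)

lemma fin_supp: "finite (set_pmf M)"
  unfolding supp by (intro finite_PiE_dflt) auto

lemma integ: "integrable M (f :: _ \<Rightarrow> real)"
  by (rule integrable_measure_pmf_finite[OF fin_supp])

lemma S_eq: "u \<in> set_pmf M \<Longrightarrow> S_var m u = (\<Sum>p\<in>P. ln (real p)) - T u"
proof -
  assume u: "u \<in> set_pmf M"
  hence uk: "\<forall>k\<in>{1..m}. u k \<noteq> 0" using supp by (auto simp: PiE_dflt_def)
  have "(if Max ((\<lambda>k. multiplicity p (u k)) ` {1..m}) \<ge> 1 then 1 else 0) = (1::real) - indicator (B p) u"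
    if "p \<in> P" for p
  proof -
    have "Max ((\<lambda>k. multiplicity p (u k)) ` {1..m}) \<ge> 1 \<longleftrightarrow> (\<exists>k\<in>{1..m}. multiplicity p (u k) \<ge> 1)"
      using m1 by (subst Max_ge_iff) auto
    also have "\<dots> \<longleftrightarrow> (\<exists>k\<in>{1..m}. p dvd u k)"
    proof -
      have "(1 \<le> multiplicity p (u k)) = (p dvd u k)" if k: "k \<in> {1..m}" for k
      proof -
        have "u k \<noteq> 0" using uk k by auto
        moreover have "\<not> is_unit p" using \<open>p \<in> P\<close> by (auto simp: P_def)
        ultimately have "(0 < multiplicity p (u k)) = (p dvd u k)"
          using multiplicity_gt_zero_iff[of "u k" p] by blast
        thus ?thesis by linarith
      qed
      thus ?thesis by auto
    qed
    finally show ?thesis by (auto simp: B_def indicator_def)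
  qed
  hence "S_var m u = (\<Sum>p\<in>P. ln (real p) * (1 - indicator (B p) u))"
    unfolding S_var_def P_def[symmetric] by (intro sum.cong) auto
  thus ?thesis unfolding T_def by (simp add: algebra_simps sum_subtractf)
qed

lemma var_eq_T: "measure_pmf.variance M (S_var m) = measure_pmf.variance M T"
proof -
  define C where "C = (\<Sum>p\<in>P. ln (real p))"
  have 1: "measure_pmf.expectation M (S_var m) = C - measure_pmf.expectation M T"
  proof -
    have "measure_pmf.expectation M (S_var m) = measure_pmf.expectation M (\<lambda>u. C - T u)"
      using S_eq C_def by (intro pmf_integral_cong) auto
    also have "\<dots> = C - measure_pmf.expectation M T"
      by (subst Bochner_Integration.integral_diff) (auto simp: integ)
    finally show ?thesis .
  qed
  show ?thesis
  proof (intro pmf_integral_cong)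
    fix u assume "u \<in> set_pmf M"
    hence "S_var m u - measure_pmf.expectation M (S_var m) = - (T u - measure_pmf.expectation M T)"
      using S_eq 1 C_def by simp
    thus "(S_var m u - measure_pmf.expectation M (S_var m))\<^sup>2 = (T u - measure_pmf.expectation M T)\<^sup>2"
      by (simp add: power2_commute)
  qed
qed

lemma prob_B2: "measure_pmf.prob M (B p \<inter> B q) = bb p q ^ m"
proof -
  have "B p \<inter> B q = Pi {1..m} (\<lambda>_. {x. \<not> p dvd x \<and> \<not> q dvd x})"
    by (auto simp: B_def Pi_def)
  hence "measure_pmf.prob M (B p \<inter> B q) = (\<Prod>k\<in>{1..m}. measure_pmf.prob (pmf_of_set {1..n}) {x. \<not> p dvd x \<and> \<not> q dvd x})"
    unfolding U_law_def by (simp add: measure_Pi_pmf_Pi)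
  also have "\<dots> = bb p q ^ m"
    using m1 mn by (subst measure_pmf_of_set) (auto simp: bb_def Int_def)
  finally show ?thesis .
qed

lemma prob_B: "measure_pmf.prob M (B p) = bb p p ^ m"
  using prob_B2[of p p] by simp

lemma ET: "measure_pmf.expectation M T = (\<Sum>p\<in>P. ln (real p) * bb p p ^ m)"
  unfolding T_def
  by (subst Bochner_Integration.integral_sum) (auto simp: integ prob_B)

lemma ET2: "measure_pmf.expectation M (\<lambda>u. (T u)^2) = (\<Sum>p\<in>P. \<Sum>q\<in>P. ln (real p) * ln (real q) * bb p q ^ m)"
proof -
  have "(\<lambda>u. (T u)^2) = (\<lambda>u. \<Sum>p\<in>P. \<Sum>q\<in>P. ln (real p) * ln (real q) * indicator (B p \<inter> B q) u)"
    unfolding T_def power2_eq_square sum_product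
    by (intro ext sum.cong refl) (simp add: indicator_inter_arith)
  thus ?thesis
    by (simp add: Bochner_Integration.integral_sum integ prob_B2)
qed

lemma var_formula: "measure_pmf.variance M T =
  (\<Sum>p\<in>P. \<Sum>q\<in>P. ln (real p) * ln (real q) * (bb p q ^ m - bb p p ^ m * bb q q ^ m))"
proof -
  have "measure_pmf.variance M T = measure_pmf.expectation M (\<lambda>u. (T u)^2) - (measure_pmf.expectation M T)^2"
    by (rule measure_pmf.variance_eq) (auto simp: integ)
  also have "(measure_pmf.expectation M T)^2 = (\<Sum>p\<in>P. \<Sum>q\<in>P. ln (real p) * ln (real q) * (bb p p ^ m * bb q q ^ m))"
    unfolding ET power2_eq_square sum_product by (simp add: mult_ac)
  also have "measure_pmf.expectation M (\<lambda>u. (T u)^2) - (\<Sum>p\<in>P. \<Sum>q\<in>P. ln (real p) * ln (real q) * (bb p p ^ m * bb q q ^ m))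
     = (\<Sum>p\<in>P. \<Sum>q\<in>P. ln (real p) * ln (real q) * (bb p q ^ m - bb p p ^ m * bb q q ^ m))"
    unfolding ET2 by (simp add: sum_subtractf[symmetric] right_diff_distrib)
  finally show ?thesis .
qed


lemma n_pos: "n > 0" using m1 mn by simp

lemma card_compl: "card {x\<in>{1..n}. \<not> Q x} = n - card {x\<in>{1..n}. Q x}"
proof -
  have "{x\<in>{1..n}. \<not> Q x} = {1..n} - {x\<in>{1..n}. Q x}" by auto
  moreover have "card ({1..n} - {x\<in>{1..n}. Q x}) = card {1..n} - card {x\<in>{1..n}. Q x}"
    by (intro card_Diff_subset) auto
  ultimately show ?thesis by simp
qed

lemma card_le_n: "card {x\<in>{1..n}. Q x} \<le> n"
proof -
  have "card {x\<in>{1..n}. Q x} \<le> card {1..n}" by (intro card_mono) auto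
  thus ?thesis by simp
qed

lemma bb_range: "0 \<le> bb p q" "bb p q \<le> 1"
  using card_le_n[of "\<lambda>x. \<not> p dvd x \<and> \<not> q dvd x"] n_pos
  by (auto simp: bb_def divide_le_eq)

lemma bb_pp: "p > 0 \<Longrightarrow> bb p p = (real n - real (n div p)) / real n"
proof -
  assume p: "p > 0"
  have "card {x\<in>{1..n}. \<not> p dvd x} = n - n div p"
    using card_compl[of "\<lambda>x. p dvd x"] card_multiples[OF p, of n] by simp
  moreover have "n div p \<le> n" by simp
  ultimately show ?thesis by (simp add: bb_def of_nat_diff)
qed

lemma bb_pq:
  assumes "prime p" "prime q" "p \<noteq> q"
  shows "bb p q = (real n - real (n div p) - real (n div q) + real (n div (p*q))) / real n"
proof -
  define A where "A = {x\<in>{1..n}. p dvd x}"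
  define B' where "B' = {x\<in>{1..n}. q dvd x}"
  have cop: "coprime p q" using assms by (simp add: primes_coprime)
  have AB: "A \<inter> B' = {x\<in>{1..n}. p*q dvd x}"
    unfolding A_def B'_def using cop
    by (auto simp: divides_mult dest: dvd_mult_left dvd_mult_right)
  have fin: "finite A" "finite B'" unfolding A_def B'_def by auto
  have ppos: "p > 0" "q > 0" "p*q > 0" using assms by (auto simp: prime_gt_0_nat)
  have cA: "card A = n div p" unfolding A_def using card_multiples ppos by blast
  have cB: "card B' = n div q" unfolding B'_def using card_multiples ppos by blast
  have cAB: "card (A \<inter> B') = n div (p*q)" unfolding AB using card_multiples ppos by blast
  have "card (A \<union> B') + card (A \<inter> B') = card A + card B'" using card_Un_Int[OF fin] by simp
  hence cU: "real (card (A \<union> B')) = real (n div p) + real (n div q) - real (n div (p*q))"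
    using cA cB cAB by (metis add_diff_cancel_right' of_nat_add)
  have seteq: "{x\<in>{1..n}. \<not> p dvd x \<and> \<not> q dvd x} = {x\<in>{1..n}. \<not> (p dvd x \<or> q dvd x)}" by auto
  have "card {x\<in>{1..n}. \<not> p dvd x \<and> \<not> q dvd x} = n - card {x\<in>{1..n}. p dvd x \<or> q dvd x}"
    unfolding seteq by (rule card_compl)
  moreover have AU: "{x\<in>{1..n}. p dvd x \<or> q dvd x} = A \<union> B'" unfolding A_def B'_def by auto
  moreover have "card (A \<union> B') \<le> n"
    using card_le_n[of "\<lambda>x. p dvd x \<or> q dvd x"] AU by metis
  ultimately have "real (card {x\<in>{1..n}. \<not> p dvd x \<and> \<not> q dvd x}) = real n - real (card (A \<union> B'))"
    by (simp add: of_nat_diff)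
  thus ?thesis unfolding bb_def cU by simp
qed

lemma div_lower: "p \<in> P \<Longrightarrow> real n / real p - 1 \<le> real (n div p) \<and> 0 \<le> real n / real p - 1"
proof -
  assume p: "p \<in> P"
  hence pp: "p > 0" "p \<le> n" using mn by (auto simp: P_def prime_gt_0_nat)
  have "1 \<le> real n / real p" using pp by (simp add: field_simps)
  thus ?thesis using div_ge_real[OF pp(1), of n] by simp
qed

lemma diff_le:
  assumes "p \<in> P" "q \<in> P" "p \<noteq> q"
  shows "bb p q - bb p p * bb q q \<le> (1 / real p + 1 / real q) / real n"
proof -
  define N where "N = real n"
  define a where "a = real (n div p)"
  define b where "b = real (n div q)"
  define c where "c = real (n div (p*q))"
  have pr: "prime p" "prime q" using assms by (auto simp: P_def)
  have pos: "real p > 0" "real q > 0" "N > 0" using pr n_pos by (auto simp: N_def prime_gt_0_nat)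
  have c_le: "c * (real p * real q) \<le> N"
  proof -
    have "(n div (p*q)) * (p*q) \<le> n" by (rule div_times_less_eq_dividend)
    hence "real ((n div (p*q)) * (p*q)) \<le> real n" by (simp only: of_nat_le_iff)
    thus ?thesis by (simp add: c_def N_def)
  qed
  have la: "N / real p - 1 \<le> a" "0 \<le> N / real p - 1" using div_lower[OF assms(1)] by (auto simp: a_def N_def)
  have lb: "N / real q - 1 \<le> b" "0 \<le> N / real q - 1" using div_lower[OF assms(2)] by (auto simp: b_def N_def)
  have ab: "(N / real p - 1) * (N / real q - 1) \<le> a * b"
    using la lb by (intro mult_mono) auto
  have "bb p q - bb p p * bb q q = (N - a - b + c) / N - ((N - a) / N) * ((N - b) / N)"
    using bb_pq[OF pr assms(3)] bb_pp pos pr by (simp add: a_def b_def c_def N_def prime_gt_0_nat)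
  also have "\<dots> = c / N - a * b / N^2" using pos by (simp add: field_simps power2_eq_square)
  also have "\<dots> \<le> (N / (real p * real q)) / N - (N / real p - 1) * (N / real q - 1) / N^2"
  proof -
    have "c \<le> N / (real p * real q)" using c_le pos by (simp add: field_simps)
    hence "c / N \<le> (N / (real p * real q)) / N" using pos by (intro divide_right_mono) auto
    moreover have "(N / real p - 1) * (N / real q - 1) / N^2 \<le> a * b / N^2"
      using ab by (intro divide_right_mono) auto
    ultimately show ?thesis by linarith
  qed
  also have "\<dots> = (1 / real p + 1 / real q) / N - 1 / N^2"
    using pos by (simp add: field_simps power2_eq_square)
  also have "\<dots> \<le> (1 / real p + 1 / real q) / N" using pos by simp
  finally show ?thesis by (simp add: N_def)
qed

lemma term_le:
  assumes "p \<in> P" "q \<in> P"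
  shows "bb p q ^ m - bb p p ^ m * bb q q ^ m \<le> (if p = q then 1 else 0) + real m * ((1 / real p + 1 / real q) / real n)"
proof -
  have pos: "real p > 0" "real q > 0" using assms by (auto simp: P_def prime_gt_0_nat)
  have nn: "0 \<le> real m * ((1 / real p + 1 / real q) / real n)" using pos by simp
  show ?thesis
  proof (cases "p = q")
    case True
    hence q: "q = p" by simp
    have h: "bb p p ^ m - bb p p ^ m * bb p p ^ m \<le> 1"
    proof -
      have "bb p p ^ m \<le> 1" using bb_range by (simp add: power_le_one)
      moreover have "0 \<le> bb p p ^ m * bb p p ^ m" using bb_range by simp
      ultimately show ?thesis by linarith
    qed
    show ?thesis using h nn unfolding q if_P[OF refl] by linarith
  next
    case False
    have "bb p q ^ m - (bb p p * bb q q) ^ m \<le> real m * max 0 (bb p q - bb p p * bb q q)"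
      using bb_range[of p q] bb_range[of p p] bb_range[of q q]
      by (intro pow_diff_le) (auto simp: mult_le_one)
    also have "\<dots> \<le> real m * ((1 / real p + 1 / real q) / real n)"
      using diff_le[OF assms False] pos by (intro mult_left_mono) auto
    finally show ?thesis using False by (simp add: power_mult_distrib)
  qed
qed

lemma var_T_le:
  "measure_pmf.variance M T \<le> ln (real m) * theta m + real m / real n * (2 * theta m * (\<Sum>p\<in>P. ln (real p) / real p))"
proof -
  have cnn: "\<And>p. p \<in> P \<Longrightarrow> 0 \<le> ln (real p)"
  proof -
    fix p assume "p \<in> P"
    hence "1 < p" using prime_gt_1_nat by (simp add: P_def)
    thus "0 \<le> ln (real p)" by simp
  qed
  have "measure_pmf.variance M T \<le> (\<Sum>p\<in>P. \<Sum>q\<in>P. ln (real p) * ln (real q) *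
        ((if p = q then 1 else 0) + real m * ((1 / real p + 1 / real q) / real n)))"
    unfolding var_formula
    by (intro sum_mono mult_left_mono term_le) (auto intro!: mult_nonneg_nonneg cnn)
  also have "\<dots> = (\<Sum>p\<in>P. ln (real p) * ln (real p)) + real m / real n *
       ((\<Sum>p\<in>P. ln (real p) / real p) * (\<Sum>q\<in>P. ln (real q)) + (\<Sum>p\<in>P. ln (real p)) * (\<Sum>q\<in>P. ln (real q) / real q))"
  proof -
    define L where "L = (\<lambda>p::nat. ln (real p))"
    define a where "a = (\<lambda>p::nat. ln (real p) / real p)"
    define K where "K = real m / real n"
    have eq: "\<And>p q. ln (real p) * ln (real q) * ((if p = q then 1 else 0) + real m * ((1 / real p + 1 / real q) / real n))
       = (if q = p then L p * L p else 0) + K * (a p * L q + L p * a q)"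
      by (auto simp: field_simps L_def a_def K_def)
    have "(\<Sum>p\<in>P. \<Sum>q\<in>P. ln (real p) * ln (real q) * ((if p = q then 1 else 0) + real m * ((1 / real p + 1 / real q) / real n)))
      = (\<Sum>p\<in>P. \<Sum>q\<in>P. (if q = p then L p * L p else 0)) + (\<Sum>p\<in>P. \<Sum>q\<in>P. K * (a p * L q + L p * a q))"
      by (simp only: eq sum.distrib)
    also have "(\<Sum>p\<in>P. \<Sum>q\<in>P. (if q = p then L p * L p else 0)) = (\<Sum>p\<in>P. L p * L p)"
      by (simp add: finP)
    also have "(\<Sum>p\<in>P. \<Sum>q\<in>P. K * (a p * L q + L p * a q)) = K * ((\<Sum>p\<in>P. \<Sum>q\<in>P. a p * L q) + (\<Sum>p\<in>P. \<Sum>q\<in>P. L p * a q))"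
      by (simp only: sum.distrib distrib_left sum_distrib_left)
    also have "(\<Sum>p\<in>P. \<Sum>q\<in>P. a p * L q) = (\<Sum>p\<in>P. a p) * (\<Sum>q\<in>P. L q)" by (simp add: sum_product)
    also have "(\<Sum>p\<in>P. \<Sum>q\<in>P. L p * a q) = (\<Sum>p\<in>P. L p) * (\<Sum>q\<in>P. a q)" by (simp add: sum_product)
    finally show ?thesis by (simp add: L_def a_def K_def)
  qed
  also have "(\<Sum>p\<in>P. ln (real p) * ln (real p)) \<le> (\<Sum>p\<in>P. ln (real m) * ln (real p))"
    using cnn by (intro sum_mono mult_right_mono) (auto simp: P_def prime_gt_0_nat dest: prime_gt_1_nat)
  also have "\<dots> = ln (real m) * theta m" by (simp add: sum_distrib_left theta_def P_def)
  finally show ?thesis by (simp add: theta_def P_def algebra_simps)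
qed

end


lemma var_S_le:
  assumes m3: "3 \<le> m" and mn: "m \<le> n"
  shows "measure_pmf.variance (U_law n m) (S_var m) \<le> 14 * (real m * ln (real m))"
proof -
  interpret ctx n m using assms by unfold_locales auto
  define Mt where "Mt = (\<Sum>p\<in>P. ln (real p) / real p)"
  have cnn: "\<And>p. p \<in> P \<Longrightarrow> 0 \<le> ln (real p)"
  proof -
    fix p assume "p \<in> P"
    hence "1 < p" using prime_gt_1_nat by (simp add: P_def)
    thus "0 \<le> ln (real p)" by simp
  qed
  have l4: "ln 4 \<le> (2::real)"
  proof -
    have "ln (4::real) = ln (2 * 2)" by simp
    also have "\<dots> = ln 2 + ln 2" by (subst ln_mult) auto
    finally show ?thesis using ln_2_less_1 by simp
  qed
  have lm: "1 \<le> ln (real m)"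
  proof -
    have "exp 1 \<le> real m" using exp_le m3 by linarith
    thus ?thesis using m3 by (subst ln_ge_iff) auto
  qed
  have th: "theta m \<le> 2 * real m"
  proof -
    have "real m * ln 4 \<le> real m * 2" using l4 by (intro mult_left_mono) auto
    thus ?thesis using theta_le[of m] by linarith
  qed
  have th0: "0 \<le> theta m" unfolding theta_def using cnn by (intro sum_nonneg) (auto simp: P_def)
  have mt: "Mt \<le> ln (real m) + 2" using mertens[of m] m3 l4 by (simp add: Mt_def P_def)
  have mt0: "0 \<le> Mt" unfolding Mt_def using cnn by (intro sum_nonneg divide_nonneg_nonneg) auto
  have q: "real m / real n \<le> 1" "0 \<le> real m / real n" using mn m3 by auto
  have "measure_pmf.variance M (S_var m) \<le> ln (real m) * theta m + real m / real n * (2 * theta m * Mt)"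
    using var_eq_T var_T_le by (simp add: Mt_def)
  also have "ln (real m) * theta m \<le> ln (real m) * (2 * real m)"
    using lm th by (intro mult_left_mono) auto
  also have "real m / real n * (2 * theta m * Mt) \<le> 2 * theta m * Mt"
    using q th0 mt0 by (intro mult_left_le_one_le) auto
  also have "2 * theta m * Mt \<le> 2 * (2 * real m) * (ln (real m) + 2)"
    using th th0 mt mt0 by (intro mult_mono) auto
  also have "ln (real m) * (2 * real m) + 2 * (2 * real m) * (ln (real m) + 2)
      = 6 * (real m * ln (real m)) + 8 * real m" by (simp add: algebra_simps)
  also have "8 * real m \<le> 8 * (real m * ln (real m))"
    using lm mult_left_mono[OF lm, of "real m"] by simp
  finally show ?thesis by simp
qed

theorem lemma6p2:
  fixes m :: "nat \<Rightarrow> nat"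
  assumes "filterlim m at_top at_top"
    and "(\<lambda>n. real (m n)) \<in> o(\<lambda>n. real n)"
  shows "(\<lambda>n. measure_pmf.variance (U_law n (m n)) (S_var (m n)))
           \<in> O(\<lambda>n. real (m n) * ln (real (m n)))"
proof -
  have e1: "eventually (\<lambda>n. 3 \<le> m n) at_top"
    using assms(1) by (simp add: filterlim_at_top)
  have e2: "eventually (\<lambda>n. norm (real (m n)) \<le> 1 * norm (real n)) at_top"
    using landau_o.smallD[OF assms(2), of 1] by simp
  show ?thesis
  proof (rule landau_o.bigI[of 14])
    show "eventually (\<lambda>n. norm (measure_pmf.variance (U_law n (m n)) (S_var (m n)))
        \<le> 14 * norm (real (m n) * ln (real (m n)))) at_top"
      using e1 e2
    proof eventually_elim
      case (elim n)
      hence mn: "m n \<le> n" by simp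
      have "0 \<le> measure_pmf.variance (U_law n (m n)) (S_var (m n))"
        by (rule measure_pmf.variance_positive)
      moreover have "0 \<le> real (m n) * ln (real (m n))" using elim by simp
      ultimately show ?case using var_S_le[OF elim(1) mn] by simp
    qed
  qed simp
qed


end
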